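(* Let $f:\mathbb{R}\to\mathbb{R}$ be a differentiable, increasing, concave function and $b'<b$ real numbers. Let $\alpha_*\in\mathbb{R}$ satisfy $f(\alpha_* )=b'$ and let $\alpha_0\in\mathbb{R}$ satisfy $f(\alpha_0)\le b$. Consider the Newton–Dinkelbach method started at $\alpha_0$: while $f(\alpha_t)<b'$, set $\alpha_{t+1}:=\alpha_t+\frac{b-f(\alpha_t)}{f'(\alpha_t)}$; output the first $\alpha_t$ with $f(\alpha_t)\ge b'$. Then it outputs $\alpha_0$ if $f(\alpha_0)\ge b'$; otherwise it outputs $\hat\alpha$ satisfying $f(\hat\alpha)\in[b',b]$ in at most \[T:=1+\left\lceil\log_{\frac{1}{1-\epsilon}}\left(\max\left\{1,\frac{D_f(\alpha_*\mid\alpha_0)}{b-b'}\right\}\right)\right\rceil\] iterations, for any $\epsilon\in(0,1)$ satisfying $\epsilon(b-f(\alpha_0))\le b-b'$, where $D_f(\beta\mid\alpha):=f'(\alpha)(\beta-\alpha)+f(\alpha)-f(\beta)$ is the Bregman divergence of $f$. *)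

theory Defs
  imports "HOL-Analysis.Analysis"
begin

definition bregman :: "(real \<Rightarrow> real) \<Rightarrow> real \<Rightarrow> real \<Rightarrow> real" where
  "bregman f \<beta> \<alpha> = deriv f \<alpha> * (\<beta> - \<alpha>) + f \<alpha> - f \<beta>"

text \<open>Iterates of the Newton--Dinkelbach update alpha_{t+1} = alpha_t + (b - f alpha_t) / f'(alpha_t),
  started at alpha_0.  The algorithm stops at the first t with f(alpha_t) >= b'.\<close>
fun nd_iter :: "(real \<Rightarrow> real) \<Rightarrow> real \<Rightarrow> real \<Rightarrow> nat \<Rightarrow> real" where
  "nd_iter f b \<alpha>0 0 = \<alpha>0"
| "nd_iter f b \<alpha>0 (Suc t) =
     nd_iter f b \<alpha>0 t + (b - f (nd_iter f b \<alpha>0 t)) / deriv f (nd_iter f b \<alpha>0 t)"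

end

theory Submission
  imports Defs
begin

lemma tangent:
  fixes f :: "real \<Rightarrow> real"
  assumes diff: "\<And>x. f differentiable (at x)" and conc: "concave_on UNIV f"
  shows "f y \<le> f x + deriv f x * (y - x)"
proof -
  have cv: "convex_on UNIV (\<lambda>x. - f x)" using conc by (simp add: concave_on_def)
  have "((\<lambda>x. - f x) has_field_derivative - deriv f x) (at x within UNIV)"
    using diff[of x] by (auto intro!: derivative_intros simp: DERIV_deriv_iff_real_differentiable)
  from convex_on_imp_above_tangent[OF cv _ _ _ this, of y] show ?thesis by simp
qed

theorem theorem2p20:
  fixes f :: "real \<Rightarrow> real" and b b' \<alpha>s \<alpha>0 \<epsilon> :: real
  assumes diff: "\<And>x. f differentiable (at x)"
    and incr: "mono f"
    and conc: "concave_on UNIV f"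
    and bb: "b' < b"
    and star: "f \<alpha>s = b'"
    and start: "f \<alpha>0 \<le> b"
    and eps: "0 < \<epsilon>" "\<epsilon> < 1"
    and eps_bound: "\<epsilon> * (b - f \<alpha>0) \<le> b - b'"
  shows "\<exists>t::nat. (\<forall>s<t. f (nd_iter f b \<alpha>0 s) < b')
           \<and> b' \<le> f (nd_iter f b \<alpha>0 t)
           \<and> (b' \<le> f \<alpha>0 \<longrightarrow> t = 0)
           \<and> (f \<alpha>0 < b' \<longrightarrow>
                f (nd_iter f b \<alpha>0 t) \<le> b
              \<and> int t \<le> 1 + \<lceil>log (1 / (1 - \<epsilon>)) (max 1 (bregman f \<alpha>s \<alpha>0 / (b - b')))\<rceil>)"
proof -
  define a where "a = nd_iter f b \<alpha>0"
  define D where "D t = bregman f \<alpha>s (a t)" for t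
  have aS: "a (Suc t) = a t + (b - f (a t)) / deriv f (a t)" for t
    by (simp add: a_def)
  have a0: "a 0 = \<alpha>0" by (simp add: a_def)
  have T: "f y \<le> f x + deriv f x * (y - x)" for x y using tangent[OF diff conc] .
  have P: "a t < \<alpha>s \<and> deriv f (a t) > 0" if "f (a t) < b'" for t
  proof -
    have lt: "a t < \<alpha>s"
    proof (rule ccontr)
      assume "\<not> a t < \<alpha>s"
      then have "f \<alpha>s \<le> f (a t)" using incr by (auto simp: mono_def)
      then show False using that star by simp
    qed
    have "b' \<le> f (a t) + deriv f (a t) * (\<alpha>s - a t)" using T[of \<alpha>s "a t"] star by simp
    then have "deriv f (a t) * (\<alpha>s - a t) > 0" using that by simp
    then show ?thesis using lt by (simp add: zero_less_mult_iff)
  qed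
  have U: "f (a (Suc t)) \<le> b" if "f (a t) < b'" for t
  proof -
    have "deriv f (a t) > 0" using P that by blast
    then have "deriv f (a t) * (a (Suc t) - a t) = b - f (a t)" by (simp add: aS)
    then show ?thesis using T[of "a (Suc t)" "a t"] by simp
  qed
  have Mo: "f (a t) \<le> f (a (Suc t))" if "f (a t) < b'" for t
  proof -
    have "deriv f (a t) > 0" using P that by blast
    then have "(b - f (a t)) / deriv f (a t) \<ge> 0" using that bb by simp
    then have "a t \<le> a (Suc t)" by (simp add: aS)
    then show ?thesis using incr by (auto simp: mono_def)
  qed
  have K: "D (Suc t) < (1 - \<epsilon>) * D t \<and> D t > b - b'"
    if h1: "f (a t) < b'" and h2: "f (a (Suc t)) < b'" and h3: "f \<alpha>0 \<le> f (a t)" for t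
  proof -
    define d where "d = deriv f (a t)"
    define d' where "d' = deriv f (a (Suc t))"
    define g where "g = b - f (a t)"
    have d: "d > 0" and lt0: "a t < \<alpha>s" using P[OF h1] by (auto simp: d_def)
    have d': "d' > 0" and lt1: "a (Suc t) < \<alpha>s" using P[OF h2] by (auto simp: d'_def)
    have g: "g > 0" using h1 bb by (simp add: g_def)
    have st: "a (Suc t) = a t + g / d" by (simp add: aS d_def g_def)
    have Dt: "D t = d * (\<alpha>s - a t) + f (a t) - b'" by (simp add: D_def bregman_def d_def star)
    have Ds: "D (Suc t) = d' * (\<alpha>s - a (Suc t)) + f (a (Suc t)) - b'"
      by (simp add: D_def bregman_def d'_def star)
    have e1: "d * (\<alpha>s - a (Suc t)) = D t - (b - b')"
      using d by (simp add: st Dt g_def field_simps)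
    have pos: "D t - (b - b') > 0" using e1 d lt1 by (metis diff_gt_0_iff_gt mult_pos_pos)
    define r where "r = d' / d"
    have r: "r > 0" using d d' by (simp add: r_def)
    have "f (a t) \<le> f (a (Suc t)) + d' * (a t - a (Suc t))" using T[of "a t" "a (Suc t)"] by (simp add: d'_def)
    also have "d' * (a t - a (Suc t)) = - (r * g)" using d by (simp add: st r_def field_simps)
    finally have fs: "f (a (Suc t)) \<ge> f (a t) + r * g" by simp
    have "b - f (a (Suc t)) \<le> (1 - r) * g" using fs by (simp add: g_def algebra_simps)
    moreover have "b - f (a (Suc t)) > \<epsilon> * g"
    proof -
      have "\<epsilon> * g \<le> \<epsilon> * (b - f \<alpha>0)" using h3 eps by (simp add: g_def)
      then show ?thesis using eps_bound h2 by linarith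
    qed
    ultimately have "\<epsilon> * g < (1 - r) * g" by linarith
    then have r1: "r < 1 - \<epsilon>" using g by (simp add: mult_less_cancel_right)
    have "D (Suc t) = r * (d * (\<alpha>s - a (Suc t))) + f (a (Suc t)) - b'"
      using d by (simp add: Ds r_def)
    also have "\<dots> = r * (D t - (b - b')) + (f (a (Suc t)) - b')" using e1 by simp
    also have "\<dots> < r * D t" proof -
      have "r * b' < r * b" using r bb by simp
      then show ?thesis using h2 by (simp add: algebra_simps)
    qed
    also have "\<dots> < (1 - \<epsilon>) * D t" using r1 pos bb by (intro mult_strict_right_mono) auto
    finally show ?thesis using pos by simp
  qed
  define good where "good k = (\<forall>s\<le>k. f (a s) < b')" for k
  have G1: "good k \<Longrightarrow> f \<alpha>0 \<le> f (a k)" for k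
  proof (induction k)
    case 0 then show ?case by (simp add: a0)
  next
    case (Suc k)
    then have "good k" by (simp add: good_def)
    with Suc have "f \<alpha>0 \<le> f (a k)" by simp
    moreover have "f (a k) \<le> f (a (Suc k))" using Mo \<open>good k\<close> by (simp add: good_def)
    ultimately show ?case by simp
  qed
  have G2: "good (Suc k) \<Longrightarrow> D (Suc k) \<le> (1 - \<epsilon>) ^ (Suc k) * D 0 \<and> D k > b - b'" for k
  proof (induction k)
    case 0
    then have "f (a 0) < b'" "f (a 1) < b'" by (auto simp: good_def)
    from K[of 0] this show ?case using a0 by simp
  next
    case (Suc k)
    then have gk: "good (Suc k)" by (simp add: good_def)
    with Suc.IH have ih: "D (Suc k) \<le> (1 - \<epsilon>) ^ (Suc k) * D 0" by blast
    have "f (a (Suc k)) < b'" "f (a (Suc (Suc k))) < b'" using Suc.prems by (auto simp: good_def)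
    with K[of "Suc k"] G1[OF gk] have k: "D (Suc (Suc k)) < (1 - \<epsilon>) * D (Suc k)" "D (Suc k) > b - b'" by auto
    have "(1 - \<epsilon>) * D (Suc k) \<le> (1 - \<epsilon>) * ((1 - \<epsilon>) ^ (Suc k) * D 0)"
      using ih eps by (intro mult_left_mono) auto
    then show ?case using k by simp
  qed
  have G: "good (Suc k) \<Longrightarrow> b - b' < (1 - \<epsilon>) ^ k * D 0" for k
  proof -
    assume gs: "good (Suc k)"
    show ?thesis
    proof (cases k)
      case 0 then show ?thesis using G2[OF gs] by simp
    next
      case (Suc j)
      have "good (Suc j)" using gs Suc by (simp add: good_def)
      then have "D (Suc j) \<le> (1 - \<epsilon>) ^ (Suc j) * D 0" using G2 by blast
      moreover have "D k > b - b'" using G2[OF gs] by blast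
      ultimately show ?thesis using Suc by simp
    qed
  qed
  have ex: "\<exists>t. b' \<le> f (a t)"
  proof -
    have "(\<lambda>k. (1 - \<epsilon>) ^ k * D 0) \<longlonglongrightarrow> 0 * D 0"
      using eps by (intro tendsto_mult LIMSEQ_power_zero tendsto_const) auto
    then have "\<forall>\<^sub>F k in sequentially. (1 - \<epsilon>) ^ k * D 0 < b - b'"
      using bb by (intro order_tendstoD) auto
    then obtain k where "(1 - \<epsilon>) ^ k * D 0 < b - b'" by (meson eventually_sequentially order_refl)
    then have "\<not> good (Suc k)" using G by fastforce
    then show ?thesis by (auto simp: good_def not_less)
  qed
  define T0 where "T0 = (LEAST t. b' \<le> f (a t))"
  have T0a: "b' \<le> f (a T0)" using ex unfolding T0_def by (meson LeastI_ex)
  have T0b: "\<forall>s<T0. f (a s) < b'" unfolding T0_def using not_less_Least not_le by blast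
  have T0c: "b' \<le> f \<alpha>0 \<longrightarrow> T0 = 0" unfolding T0_def using a0 by (metis Least_eq_0)
  have T0d: "f (a T0) \<le> b \<and> int T0 \<le> 1 + \<lceil>log (1 / (1 - \<epsilon>)) (max 1 (bregman f \<alpha>s \<alpha>0 / (b - b')))\<rceil>"
    if lt: "f \<alpha>0 < b'"
  proof -
    have T0pos: "T0 > 0" using lt T0a a0 by (metis neq0_conv not_le)
    then obtain m where m: "T0 = Suc m" using gr0_implies_Suc by blast
    have "f (a T0) \<le> b" using U[of m] T0b m by simp
    define q where "q = 1 / (1 - \<epsilon>)"
    define M where "M = max 1 (bregman f \<alpha>s \<alpha>0 / (b - b'))"
    have q1: "q > 1" using eps by (simp add: q_def)
    have M1: "M \<ge> 1" by (simp add: M_def)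
    have lg: "log q M \<ge> 0" using q1 M1 by simp
    have "int T0 \<le> 1 + \<lceil>log q M\<rceil>"
    proof (cases m)
      case 0 then show ?thesis using m lg by simp
    next
      case (Suc k)
      have "good (Suc k)" using T0b m Suc by (simp add: good_def)
      then have "b - b' < (1 - \<epsilon>) ^ k * D 0" using G by blast
      then have "1 < (1 - \<epsilon>) ^ k * (D 0 / (b - b'))" using bb by (simp add: field_simps)
      then have "q ^ k < D 0 / (b - b')" using eps
        by (simp add: q_def power_one_over field_simps)
      also have "\<dots> \<le> M" by (simp add: M_def D_def a0)
      finally have "q powr real k < M" using q1 by (simp add: powr_realpow)
      then have "real k < log q M" using q1 M1 by (simp add: less_log_iff)
      then have "real k < real_of_int \<lceil>log q M\<rceil>" by linarith
      then have "int k < \<lceil>log q M\<rceil>" by linarith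
      then show ?thesis using m Suc by simp
    qed
    then show ?thesis using \<open>f (a T0) \<le> b\<close> by (simp add: q_def M_def)
  qed
  show ?thesis
    apply (rule exI[of _ T0])
    using T0a T0b T0c T0d by (simp add: a_def)
qed

end
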